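(* Let $A=(a_{ij})$ be a nonnegative weighted adjacency matrix on vertices $v_1,\dots,v_n$ with all out-degrees $o(v_i)=\sum_j a_{ij}>0$, let $P=D_o^{-1}A$ with $D_o=\operatorname{diag}(o(v_1),\dots,o(v_n))$, let $\nu(v_j)=\sum_{\ell=1}^n p_{\ell j}$, assume $\nu(v_j)>0$ for all $j$, set $D_\nu=\operatorname{diag}(\nu(v_1),\dots,\nu(v_n))$ and $Q=PD_\nu^{-1}P^\top$. Let $(x^{(k)},y^{(k)})$, $k=1,2,\dots$, be i.i.d. pairs where $x^{(k)}$ is uniformly distributed on $\{v_1,\dots,v_n\}$ and, given $x^{(k)}=v_i$, $y^{(k)}=v_j$ with probability $p_{ij}$. Let $\phi=(\phi_1,\dots,\phi_n)^\top$ with $\phi_i$ the indicator function of $v_i$, and for each $m$ let $\Phi_x=[\phi(x^{(1)}),\dots,\phi(x^{(m)})]$, $\Phi_y=[\phi(y^{(1)}),\dots,\phi(y^{(m)})]\in\mathbb{R}^{n\times m}$, $C_{xx}=\frac1m\Phi_x\Phi_x^\top$, $C_{yy}=\frac1m\Phi_y\Phi_y^\top$, $C_{xy}=C_{yx}^\top=\frac1m\Phi_x\Phi_y^\top$, and $\widehat K^{(m)}=C_{xx}^+C_{xy}$, $\widehat P^{(m)}=C_{xx}^+C_{yx}$, $\widehat F^{(m)}=C_{xx}^+C_{xy}C_{yy}^+C_{yx}$, where $^+$ denotes the Moore–Penrose pseudoinverse. Then, as $m\to\infty$ (almost surely), $\widehat K^{(m)}\to P$, $\widehat P^{(m)}\to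 P^\top$, and $\widehat F^{(m)}\to Q$.
   Context: $P$ is the transition matrix of the random walk on the graph; $\widehat K^{(m)}$, $\widehat P^{(m)}$, $\widehat F^{(m)}$ are the extended dynamic mode decomposition (EDMD) estimates of the Koopman, Perron–Frobenius and forward-backward operators from the data pairs, using the basis of vertex indicator functions (one-hot encodings). *)

theory Defs
  imports "HOL-Probability.Probability"
begin

definition pinv :: "real^'n^'n \<Rightarrow> real^'n^'n" where
  "pinv A = (THE B. A ** B ** A = A \<and> B ** A ** B = B \<and>
                    transpose (A ** B) = A ** B \<and> transpose (B ** A) = B ** A)"

definition outer :: "real^'n \<Rightarrow> real^'m \<Rightarrow> real^'m^'n" where
  "outer a b = (\<chi> i j. a$i * b$j)"

definition phi :: "'n::finite \<Rightarrow> real^'n" where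
  "phi v = (\<chi> i. if i = v then 1 else 0)"

text \<open>Empirical covariance (1/m) Phi_u Phi_w^T = (1/m) sum_k phi(u_k) phi(w_k)^T,
  samples indexed k = 0..m-1.\<close>
definition emp_cov :: "(nat \<Rightarrow> 'n::finite) \<Rightarrow> (nat \<Rightarrow> 'n) \<Rightarrow> nat \<Rightarrow> real^'n^'n" where
  "emp_cov u w m = (1 / real m) *\<^sub>R (\<Sum>k<m. outer (phi (u k)) (phi (w k)))"

definition K_hat :: "(nat \<Rightarrow> 'n::finite) \<Rightarrow> (nat \<Rightarrow> 'n) \<Rightarrow> nat \<Rightarrow> real^'n^'n" where
  "K_hat x y m = pinv (emp_cov x x m) ** emp_cov x y m"

definition P_hat :: "(nat \<Rightarrow> 'n::finite) \<Rightarrow> (nat \<Rightarrow> 'n) \<Rightarrow> nat \<Rightarrow> real^'n^'n" where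
  "P_hat x y m = pinv (emp_cov x x m) ** emp_cov y x m"

definition F_hat :: "(nat \<Rightarrow> 'n::finite) \<Rightarrow> (nat \<Rightarrow> 'n) \<Rightarrow> nat \<Rightarrow> real^'n^'n" where
  "F_hat x y m = pinv (emp_cov x x m) ** emp_cov x y m ** pinv (emp_cov y y m) ** emp_cov y x m"

end

theory Submission
  imports Defs
begin


definition dg :: "('n::finite \<Rightarrow> real) \<Rightarrow> real^'n^'n" where
  "dg d = (\<chi> i j. if i = j then d i else 0)"

definition cnt :: "(nat \<Rightarrow> 'n::finite) \<Rightarrow> (nat \<Rightarrow> 'n) \<Rightarrow> nat \<Rightarrow> 'n \<Rightarrow> 'n \<Rightarrow> real" where
  "cnt x y m i j = (1 / real m) * (\<Sum>k<m. if x k = i \<and> y k = j then 1 else 0)"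

lemma ifz1: "(if c then (x::real) else 0) * y = (if c then x * y else 0)" by simp
lemma ifz2: "y * (if c then (x::real) else 0) = (if c then y * x else 0)" by simp

lemma dg_mult: "dg a ** dg b = dg (\<lambda>i. a i * b i)"
  by (simp add: dg_def matrix_matrix_mult_def vec_eq_iff ifz1 ifz2)

lemma dg_mult_left: "(dg a ** B) $ i $ j = a i * B $ i $ j"
  by (simp add: dg_def matrix_matrix_mult_def ifz1 ifz2)

lemma dg_mult_right: "(B ** dg a) $ i $ j = B $ i $ j * a j"
  by (simp add: dg_def matrix_matrix_mult_def ifz1 ifz2)

lemma transpose_dg: "transpose (dg a) = dg a"
  by (simp add: dg_def transpose_def vec_eq_iff)

lemma pinv_dg:
  assumes "\<And>i. d i \<noteq> 0"
  shows "pinv (dg d) = dg (\<lambda>i. 1 / d i)"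
proof -
  have inv1: "dg d ** dg (\<lambda>i. 1 / d i) = mat 1" "dg (\<lambda>i. 1 / d i) ** dg d = mat 1"
    using assms by (simp_all only: dg_mult) (simp_all add: dg_def mat_def)
  show ?thesis unfolding pinv_def
  proof (rule the_equality)
    show "dg d ** dg (\<lambda>i. 1 / d i) ** dg d = dg d \<and>
      dg (\<lambda>i. 1 / d i) ** dg d ** dg (\<lambda>i. 1 / d i) = dg (\<lambda>i. 1 / d i) \<and>
      transpose (dg d ** dg (\<lambda>i. 1 / d i)) = dg d ** dg (\<lambda>i. 1 / d i) \<and>
      transpose (dg (\<lambda>i. 1 / d i) ** dg d) = dg (\<lambda>i. 1 / d i) ** dg d"
      by (simp add: inv1 transpose_mat)
  next
    fix B assume "dg d ** B ** dg d = dg d \<and> B ** dg d ** B = B \<and>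
         transpose (dg d ** B) = dg d ** B \<and> transpose (B ** dg d) = B ** dg d"
    then have h: "dg d ** B ** dg d = dg d" by blast
    have "dg (\<lambda>i. 1 / d i) ** (dg d ** B ** dg d) ** dg (\<lambda>i. 1 / d i)
       = ((dg (\<lambda>i. 1 / d i) ** dg d) ** B) ** (dg d ** dg (\<lambda>i. 1 / d i))"
      by (metis matrix_mul_assoc)
    then have "B = dg (\<lambda>i. 1 / d i) ** (dg d ** B ** dg d) ** dg (\<lambda>i. 1 / d i)"
      by (simp add: inv1 matrix_mul_lid matrix_mul_rid)
    also have "\<dots> = dg (\<lambda>i. 1 / d i)" using h
      by (simp add: inv1 flip: matrix_mul_assoc)
    finally show "B = dg (\<lambda>i. 1 / d i)" .
  qed
qed

lemma emp_cov_nth: "emp_cov u w m $ i $ j = cnt u w m i j"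
  unfolding emp_cov_def cnt_def outer_def phi_def
  by (simp add: sum_component) (intro disjI2 sum.cong, auto)

lemma mat_tendsto_iff:
  "((f::nat \<Rightarrow> real^'n^'m) \<longlonglongrightarrow> a) \<longleftrightarrow> (\<forall>i j. (\<lambda>m. f m $ i $ j) \<longlonglongrightarrow> a $ i $ j)"
proof
  assume "f \<longlonglongrightarrow> a" then show "\<forall>i j. (\<lambda>m. f m $ i $ j) \<longlonglongrightarrow> a $ i $ j"
    by (intro allI tendsto_vec_nth)
next
  assume "\<forall>i j. (\<lambda>m. f m $ i $ j) \<longlonglongrightarrow> a $ i $ j"
  then show "f \<longlonglongrightarrow> a" by (intro vec_tendstoI) blast
qed

lemma mult_tendsto:
  fixes A B :: "nat \<Rightarrow> real^'n::finite^'n"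
  assumes "A \<longlonglongrightarrow> a" "B \<longlonglongrightarrow> b"
  shows "(\<lambda>m. A m ** B m) \<longlonglongrightarrow> a ** b"
proof -
  have "\<forall>i j. (\<lambda>m. A m$i$j) \<longlonglongrightarrow> a$i$j" "\<forall>i j. (\<lambda>m. B m$i$j) \<longlonglongrightarrow> b$i$j"
    using assms mat_tendsto_iff by blast+
  then show ?thesis
    by (subst mat_tendsto_iff) (auto simp: matrix_matrix_mult_def intro!: tendsto_sum tendsto_mult)
qed

lemma sum_ind_j: "(\<Sum>j\<in>(UNIV::'n::finite set). if a = i \<and> b = j then (1::real) else 0) = (if a = i then 1 else 0)"
  by (cases "a = i") (simp_all add: eq_commute)

lemma sum_ind_i: "(\<Sum>i\<in>(UNIV::'n::finite set). if a = i \<and> b = j then (1::real) else 0) = (if b = j then 1 else 0)"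
  by (cases "b = j") (simp_all add: eq_commute)

lemma cnt_xx: "cnt x x m i i' = (if i = i' then (\<Sum>j\<in>UNIV. cnt x y m i j) else 0)"
proof (cases "i = i'")
  case True
  have "(\<Sum>j\<in>UNIV. cnt x y m i j) = (1 / real m) * (\<Sum>k<m. \<Sum>j\<in>UNIV. if x k = i \<and> y k = j then 1 else 0)"
    unfolding cnt_def by (simp add: sum_distrib_left sum.swap[of _ UNIV])
  also have "\<dots> = cnt x x m i i'" using True by (simp add: sum_ind_j cnt_def)
  finally show ?thesis using True by simp
qed (auto simp: cnt_def intro!: sum.neutral)

lemma cnt_yy: "cnt y y m j j' = (if j = j' then (\<Sum>i\<in>UNIV. cnt x y m i j) else 0)"
proof (cases "j = j'")
  case True
  have "(\<Sum>i\<in>UNIV. cnt x y m i j) = (1 / real m) * (\<Sum>k<m. \<Sum>i\<in>UNIV. if x k = i \<and> y k = j then 1 else 0)"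
    unfolding cnt_def by (simp add: sum_distrib_left sum.swap[of _ UNIV])
  also have "\<dots> = cnt y y m j j'" using True by (simp add: sum_ind_i cnt_def)
  finally show ?thesis using True by simp
qed (auto simp: cnt_def intro!: sum.neutral)

lemma cnt_yx: "cnt y x m i j = cnt x y m j i"
  unfolding cnt_def by (simp add: conj_commute)

lemma det_conv:
  fixes x y :: "nat \<Rightarrow> 'n::finite" and P Q :: "real^'n^'n" and nu :: "'n \<Rightarrow> real"
  assumes lim: "\<And>i j. (\<lambda>m. cnt x y m i j) \<longlonglongrightarrow> P$i$j / real CARD('n)"
    and rows: "\<And>i. (\<Sum>j\<in>UNIV. P$i$j) = 1"
    and nu_def: "\<And>j. nu j = (\<Sum>l\<in>UNIV. P$l$j)"
    and nu_pos: "\<And>j. nu j > 0"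
    and Q_def: "Q = P ** (\<chi> i j. if i = j then 1 / nu i else 0) ** transpose P"
  shows "K_hat x y \<longlonglongrightarrow> P \<and> P_hat x y \<longlonglongrightarrow> transpose P \<and> F_hat x y \<longlonglongrightarrow> Q"
proof -
  define N where "N = real CARD('n)"
  have N: "N > 0" unfolding N_def by simp
  define dx where "dx m i = (\<Sum>j\<in>UNIV. cnt x y m i j)" for m i
  define dy where "dy m j = (\<Sum>i\<in>UNIV. cnt x y m i j)" for m j
  have Cxx: "emp_cov x x m = dg (dx m)" for m
    by (simp add: vec_eq_iff emp_cov_nth dg_def dx_def cnt_xx[of x m _ _ y])
  have Cyy: "emp_cov y y m = dg (dy m)" for m
    by (simp add: vec_eq_iff emp_cov_nth dg_def dy_def cnt_yy[of y m _ _ x])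
  have Cxy: "emp_cov x y \<longlonglongrightarrow> (\<chi> i j. P$i$j / N)"
    by (subst mat_tendsto_iff) (simp add: emp_cov_nth lim N_def)
  have Cyx: "emp_cov y x \<longlonglongrightarrow> (\<chi> i j. P$j$i / N)"
    by (subst mat_tendsto_iff) (simp add: emp_cov_nth cnt_yx lim N_def)
  have dxl: "(\<lambda>m. dx m i) \<longlonglongrightarrow> 1 / N" for i
  proof -
    have "(\<lambda>m. dx m i) \<longlonglongrightarrow> (\<Sum>j\<in>UNIV. P$i$j / N)"
      unfolding dx_def N_def by (intro tendsto_sum lim)
    then show ?thesis by (simp add: rows flip: sum_divide_distrib)
  qed
  have dyl: "(\<lambda>m. dy m j) \<longlonglongrightarrow> nu j / N" for j
  proof -
    have "(\<lambda>m. dy m j) \<longlonglongrightarrow> (\<Sum>i\<in>UNIV. P$i$j / N)"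
      unfolding dy_def N_def by (intro tendsto_sum lim)
    then show ?thesis by (simp add: nu_def flip: sum_divide_distrib)
  qed
  have ev: "eventually (\<lambda>m. (\<forall>i. dx m i > 0) \<and> (\<forall>j. dy m j > 0)) sequentially"
  proof (intro eventually_conj eventually_all_finite allI)
    fix i show "eventually (\<lambda>m. dx m i > 0) sequentially"
      using order_tendstoD(1)[OF dxl[of i], of 0] N by simp
  next
    fix j show "eventually (\<lambda>m. dy m j > 0) sequentially"
      using order_tendstoD(1)[OF dyl[of j], of 0] N nu_pos[of j] by simp
  qed
  have Dx: "(\<lambda>m. dg (\<lambda>i. 1 / dx m i)) \<longlonglongrightarrow> dg (\<lambda>i. N)"
  proof (subst mat_tendsto_iff, intro allI)
    fix i j
    have "(\<lambda>m. 1 / dx m i) \<longlonglongrightarrow> 1 / (1 / N)"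
      using N by (intro tendsto_divide dxl tendsto_const) simp
    then show "(\<lambda>m. dg (\<lambda>i. 1 / dx m i) $ i $ j) \<longlonglongrightarrow> dg (\<lambda>i. N) $ i $ j"
      by (auto simp: dg_def)
  qed
  have Dy: "(\<lambda>m. dg (\<lambda>j. 1 / dy m j)) \<longlonglongrightarrow> dg (\<lambda>j. N / nu j)"
  proof (subst mat_tendsto_iff, intro allI)
    fix i j
    have "(\<lambda>m. 1 / dy m i) \<longlonglongrightarrow> 1 / (nu i / N)"
      using N nu_pos[of i] by (intro tendsto_divide dyl tendsto_const) simp
    then show "(\<lambda>m. dg (\<lambda>j. 1 / dy m j) $ i $ j) \<longlonglongrightarrow> dg (\<lambda>j. N / nu j) $ i $ j"
      by (auto simp: dg_def)
  qed
  have pinvx: "eventually (\<lambda>m. pinv (emp_cov x x m) = dg (\<lambda>i. 1 / dx m i)) sequentially"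
    using ev by eventually_elim (auto simp: Cxx intro!: pinv_dg dest: less_imp_neq[symmetric])
  have pinvy: "eventually (\<lambda>m. pinv (emp_cov y y m) = dg (\<lambda>i. 1 / dy m i)) sequentially"
    using ev by eventually_elim (auto simp: Cyy intro!: pinv_dg dest: less_imp_neq[symmetric])
  have K: "K_hat x y \<longlonglongrightarrow> P"
  proof -
    have "(\<lambda>m. dg (\<lambda>i. 1 / dx m i) ** emp_cov x y m) \<longlonglongrightarrow> dg (\<lambda>i. N) ** (\<chi> i j. P$i$j / N)"
      by (intro mult_tendsto Dx Cxy)
    also have "dg (\<lambda>i. N) ** (\<chi> i j. P$i$j / N) = P"
      using N by (simp add: vec_eq_iff dg_mult_left)
    finally show ?thesis
      using pinvx unfolding K_hat_def
      by (rule Lim_transform_eventually[OF _ eventually_mono]) simp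
  qed
  have PP: "P_hat x y \<longlonglongrightarrow> transpose P"
  proof -
    have "(\<lambda>m. dg (\<lambda>i. 1 / dx m i) ** emp_cov y x m) \<longlonglongrightarrow> dg (\<lambda>i. N) ** (\<chi> i j. P$j$i / N)"
      by (intro mult_tendsto Dx Cyx)
    also have "dg (\<lambda>i. N) ** (\<chi> i j. P$j$i / N) = transpose P"
      using N by (simp add: vec_eq_iff dg_mult_left transpose_def)
    finally show ?thesis
      using pinvx unfolding P_hat_def
      by (rule Lim_transform_eventually[OF _ eventually_mono]) simp
  qed
  have F: "F_hat x y \<longlonglongrightarrow> Q"
  proof -
    have "(\<lambda>m. dg (\<lambda>i. 1 / dx m i) ** emp_cov x y m ** dg (\<lambda>i. 1 / dy m i) ** emp_cov y x m)
       \<longlonglongrightarrow> dg (\<lambda>i. N) ** (\<chi> i j. P$i$j / N) ** dg (\<lambda>j. N / nu j) ** (\<chi> i j. P$j$i / N)"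
      by (intro mult_tendsto Dx Dy Cxy Cyx)
    also have "dg (\<lambda>i. N) ** (\<chi> i j. P$i$j / N) ** dg (\<lambda>j. N / nu j) ** (\<chi> i j. P$j$i / N) = Q"
    proof -
      have Qd: "Q = P ** dg (\<lambda>i. 1 / nu i) ** transpose P"
        unfolding Q_def dg_def by simp
      show ?thesis unfolding Qd
        using N nu_pos
        by (simp add: vec_eq_iff matrix_matrix_mult_def[of _ "(\<chi> i j. P$j$i / N)"]
            matrix_matrix_mult_def[of _ "(\<chi> i j. P$j$i)"] dg_mult_left dg_mult_right transpose_def)
    qed
    finally show ?thesis
      using pinvx pinvy unfolding F_hat_def
      by (rule Lim_transform_eventually[OF _ eventually_mono[OF eventually_conj]]) simp
  qed
  show ?thesis using K PP F by blast
qed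



lemma slln_cell:
  fixes X Y :: "nat \<Rightarrow> 'a \<Rightarrow> 'n::finite" and M :: "'a measure" and p :: real
  assumes M: "prob_space M"
    and indep: "prob_space.indep_vars M (\<lambda>_. count_space UNIV) (\<lambda>k \<omega>. (X k \<omega>, Y k \<omega>)) UNIV"
    and distr: "\<And>k. measure M {\<omega> \<in> space M. X k \<omega> = i \<and> Y k \<omega> = j} = p"
  shows "AE \<omega> in M. (\<lambda>m. cnt (\<lambda>k. X k \<omega>) (\<lambda>k. Y k \<omega>) m i j) \<longlonglongrightarrow> p"
proof -
  interpret prob_space M by (rule M)
  define Z where "Z k \<omega> = (if (X k \<omega>, Y k \<omega>) = (i, j) then 1 else 0 :: real)" for k \<omega>
  have rv: "(\<lambda>\<omega>. (X k \<omega>, Y k \<omega>)) \<in> measurable M (count_space UNIV)" for k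
    using indep unfolding indep_vars_def by blast
  have indZ: "indep_vars (\<lambda>_. borel) Z UNIV"
    unfolding Z_def
    by (rule indep_vars_compose2[OF indep, of "\<lambda>_ q. if q = (i, j) then 1 else 0 :: real"]) simp
  have Zmeas[measurable]: "Z k \<in> borel_measurable M" for k
    using indZ unfolding indep_vars_def by blast
  have setA: "{\<omega> \<in> space M. X k \<omega> = i \<and> Y k \<omega> = j} \<in> sets M" for k
  proof -
    have "{\<omega> \<in> space M. X k \<omega> = i \<and> Y k \<omega> = j} = (\<lambda>\<omega>. (X k \<omega>, Y k \<omega>)) -` {(i,j)} \<inter> space M"
      by auto
    then show ?thesis using measurable_sets[OF rv, of "{(i,j)}" k] by simp
  qed
  have EZ: "expectation (Z k) = p" for k
  proof -
    have "expectation (Z k) = expectation (indicator {\<omega> \<in> space M. X k \<omega> = i \<and> Y k \<omega> = j})"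
      by (intro Bochner_Integration.integral_cong) (auto simp: Z_def indicator_def)
    also have "\<dots> = p" using distr[of k] setA[of k] by (simp add: Int_absorb2)
    finally show ?thesis .
  qed
  define S where "S m \<omega> = (\<Sum>k<m. Z k \<omega>)" for m \<omega>
  have cntS: "cnt (\<lambda>k. X k \<omega>) (\<lambda>k. Y k \<omega>) m i j = S m \<omega> / real m" for m \<omega>
    unfolding cnt_def S_def Z_def by simp
  have one: "AE \<omega> in M. eventually (\<lambda>m. \<bar>S m \<omega> / real m - p\<bar> < e) sequentially" if e: "e > 0" for e
  proof -
    define B where "B m = {\<omega> \<in> space M. real m * e \<le> \<bar>S m \<omega> - real m * p\<bar>}" for m
    have Bsets: "B m \<in> sets M" for m unfolding B_def S_def by measurable
    have bound: "measure M (B m) \<le> 2 * exp (-2 * e\<^sup>2) ^ m" for m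
    proof (cases "m = 0")
      case True
      then show ?thesis using order_trans[OF prob_le_1[of "B 0"], of 2] by simp
    next
      case False
      interpret H: Hoeffding_ineq M "{..<m}" Z "\<lambda>_. 0" "\<lambda>_. 1" "real m * p"
        by unfold_locales (auto simp: EZ Z_def intro: indep_vars_subset[OF indZ])
      have "measure M (B m) \<le> 2 * exp (-2 * (real m * e)\<^sup>2 / (\<Sum>i<m. (1 - 0)\<^sup>2))"
        using H.Hoeffding_ineq_abs_ge[of "real m * e"] False e unfolding B_def S_def
        by simp
      also have "-2 * (real m * e)\<^sup>2 / (\<Sum>i<m. (1 - 0)\<^sup>2) = real m * (-2 * e\<^sup>2)"
        using False by (simp add: power2_eq_square)
      also have "exp (real m * (-2 * e\<^sup>2)) = exp (-2 * e\<^sup>2) ^ m" by (rule exp_of_nat_mult)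
      finally show ?thesis .
    qed
    have q: "exp (-2 * e\<^sup>2) < 1" using e by simp
    have "summable (\<lambda>m. 2 * exp (-2 * e\<^sup>2) ^ m)"
      using q by (intro summable_mult summable_geometric) simp
    then have summ: "summable (\<lambda>m. measure M (B m))"
      by (rule summable_comparison_test'[where N=0]) (use bound in simp)
    have "AE \<omega> in M. eventually (\<lambda>m. \<omega> \<in> space M - B m) sequentially"
      by (rule borel_cantelli_AE1[OF Bsets]) (simp_all add: summ emeasure_eq_measure)
    then show ?thesis
    proof (rule AE_mp[OF _ AE_I2], intro impI)
      fix \<omega> assume sp: "\<omega> \<in> space M" and ev: "eventually (\<lambda>m. \<omega> \<in> space M - B m) sequentially"
      show "eventually (\<lambda>m. \<bar>S m \<omega> / real m - p\<bar> < e) sequentially"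
        using ev eventually_gt_at_top[of 0]
      proof eventually_elim
        case (elim m)
        then have "\<bar>S m \<omega> - real m * p\<bar> < real m * e" using sp by (auto simp: B_def)
        moreover have "S m \<omega> / real m - p = (S m \<omega> - real m * p) / real m"
          using elim by (simp add: field_simps)
        ultimately show ?case using elim by (simp add: abs_divide field_simps)
      qed
    qed
  qed
  have "AE \<omega> in M. \<forall>r::nat. eventually (\<lambda>m. \<bar>S m \<omega> / real m - p\<bar> < inverse (real (Suc r))) sequentially"
    by (subst AE_all_countable) (intro allI one, simp)
  then show ?thesis
  proof (rule AE_mp[OF _ AE_I2], intro impI)
    fix \<omega> assume all: "\<forall>r::nat. eventually (\<lambda>m. \<bar>S m \<omega> / real m - p\<bar> < inverse (real (Suc r))) sequentially"
    show "(\<lambda>m. cnt (\<lambda>k. X k \<omega>) (\<lambda>k. Y k \<omega>) m i j) \<longlonglongrightarrow> p"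
      unfolding cntS
    proof (rule tendstoI)
      fix e :: real assume "e > 0"
      then obtain r where r: "inverse (real (Suc r)) < e" using reals_Archimedean by blast
      show "eventually (\<lambda>m. dist (S m \<omega> / real m) p < e) sequentially"
        using all[rule_format, of r] by eventually_elim (use r in \<open>simp add: dist_real_def\<close>)
    qed
  qed
qed



theorem mainTheorem2:
  fixes A :: "real^'n^'n"
    and M :: "'a measure"
    and X Y :: "nat \<Rightarrow> 'a \<Rightarrow> 'n"
    and P Q :: "real^'n^'n"
    and outdeg nu :: "'n \<Rightarrow> real"
  assumes nonneg: "\<And>i j. A$i$j \<ge> 0"
    and outdeg_def: "\<And>i. outdeg i = (\<Sum>j\<in>UNIV. A$i$j)"
    and outdeg_pos: "\<And>i. outdeg i > 0"
    and P_def: "P = (\<chi> i j. A$i$j / outdeg i)"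
    and nu_def: "\<And>j. nu j = (\<Sum>l\<in>UNIV. P$l$j)"
    and nu_pos: "\<And>j. nu j > 0"
    and Q_def: "Q = P ** (\<chi> i j. if i = j then 1 / nu i else 0) ** transpose P"
    and M: "prob_space M"
    and indep: "prob_space.indep_vars M (\<lambda>_. count_space UNIV) (\<lambda>k \<omega>. (X k \<omega>, Y k \<omega>)) UNIV"
    and distr: "\<And>k i j. measure M {\<omega> \<in> space M. X k \<omega> = i \<and> Y k \<omega> = j}
                         = P$i$j / real CARD('n)"
  shows "AE \<omega> in M.
           (\<lambda>m. K_hat (\<lambda>k. X k \<omega>) (\<lambda>k. Y k \<omega>) m) \<longlonglongrightarrow> P \<and>
           (\<lambda>m. P_hat (\<lambda>k. X k \<omega>) (\<lambda>k. Y k \<omega>) m) \<longlonglongrightarrow> transpose P \<and>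
           (\<lambda>m. F_hat (\<lambda>k. X k \<omega>) (\<lambda>k. Y k \<omega>) m) \<longlonglongrightarrow> Q"
proof -
  have rows: "(\<Sum>j\<in>UNIV. P$i$j) = 1" for i
  proof -
    have "(\<Sum>j\<in>UNIV. P$i$j) = (\<Sum>j\<in>UNIV. A$i$j) / outdeg i"
      by (simp add: P_def sum_divide_distrib)
    then show ?thesis using outdeg_pos[of i] by (simp add: outdeg_def)
  qed
  have "AE \<omega> in M. \<forall>i j. (\<lambda>m. cnt (\<lambda>k. X k \<omega>) (\<lambda>k. Y k \<omega>) m i j) \<longlonglongrightarrow> P$i$j / real CARD('n)"
    by (simp only: AE_all_countable) (intro allI slln_cell[OF M indep] distr)
  then show ?thesis
  proof (rule AE_mp[OF _ AE_I2], intro impI)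
    fix \<omega> assume "\<forall>i j. (\<lambda>m. cnt (\<lambda>k. X k \<omega>) (\<lambda>k. Y k \<omega>) m i j) \<longlonglongrightarrow> P$i$j / real CARD('n)"
    then show "(\<lambda>m. K_hat (\<lambda>k. X k \<omega>) (\<lambda>k. Y k \<omega>) m) \<longlonglongrightarrow> P \<and>
           (\<lambda>m. P_hat (\<lambda>k. X k \<omega>) (\<lambda>k. Y k \<omega>) m) \<longlonglongrightarrow> transpose P \<and>
           (\<lambda>m. F_hat (\<lambda>k. X k \<omega>) (\<lambda>k. Y k \<omega>) m) \<longlonglongrightarrow> Q"
      using det_conv[of "\<lambda>k. X k \<omega>" "\<lambda>k. Y k \<omega>" P nu Q] rows nu_def nu_pos Q_def
      by blast
  qed
qed

end
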